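(* Let $(M,d)$ be a metric space, let $X\subseteq M$ with $|X|=t$, let $h$ be an integer with $1\le h\le t$, and let $Y\subseteq M$ be a nonempty finite set. Then there exists a subset $S\subseteq Y$ such that (A) $|S|\le t/h$, and (B) for every $y\in Y$, $d_S(y,1)\le 2\,d_X(y,h)$.
   Context: For a finite set $S\subseteq M$, a point $p\in M$ and an integer $1\le i\le|S|$, $d_S(p,i)$ denotes the radius of the smallest closed ball centered at $p$ containing at least $i$ points of $S$; in particular $d_S(p,1)$ is the distance from $p$ to the nearest point of $S$. *)

theory Defs
  imports "HOL-Analysis.Analysis"
begin

text \<open>d_S(p,i): radius of the smallest closed ball centred at p containing at least
  i points of S (meaningful for finite S and 1 <= i <= card S, where the infimum is attained).\<close>
definition dS :: "'a::metric_space set \<Rightarrow> 'a \<Rightarrow> nat \<Rightarrow> real" where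
  "dS S p i = Inf {r. 0 \<le> r \<and> i \<le> card {s \<in> S. dist p s \<le> r}}"

end

theory Submission
  imports Defs
begin

lemma dS_attain:
  fixes X :: "'a::metric_space set"
  assumes "finite X" "1 \<le> h" "h \<le> card X"
  shows "0 \<le> dS X p h \<and> h \<le> card {x\<in>X. dist p x \<le> dS X p h}"
proof -
  let ?R = "{r. 0 \<le> r \<and> h \<le> card {s \<in> X. dist p s \<le> r}}"
  define D where "D = {d \<in> dist p ` X. h \<le> card {x\<in>X. dist p x \<le> d}}"
  have Xne: "X \<noteq> {}" using assms by auto
  have "{x\<in>X. dist p x \<le> Max (dist p ` X)} = X" using assms(1) by auto
  hence "Max (dist p ` X) \<in> D" unfolding D_def using assms Xne by auto
  hence Dne: "D \<noteq> {}" by auto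
  have Df: "finite D" unfolding D_def using assms(1) by auto
  define m where "m = Min D"
  have mD: "m \<in> D" unfolding m_def using Df Dne by auto
  have mR: "m \<in> ?R" using mD unfolding D_def by auto
  have low: "\<forall>r\<in>?R. m \<le> r"
  proof
    fix r assume r: "r \<in> ?R"
    define A where "A = {x\<in>X. dist p x \<le> r}"
    have fA: "finite A" unfolding A_def using assms(1) by auto
    have "card A \<ge> 1" using r assms unfolding A_def by auto
    hence Ane: "A \<noteq> {}" by auto
    define m' where "m' = Max (dist p ` A)"
    have m'r: "m' \<le> r" unfolding m'_def using fA Ane by (auto simp: A_def)
    have eq: "{x\<in>X. dist p x \<le> m'} = A"
    proof
      show "{x\<in>X. dist p x \<le> m'} \<subseteq> A" using m'r unfolding A_def by auto
      show "A \<subseteq> {x\<in>X. dist p x \<le> m'}" unfolding m'_def using fA by (auto simp: A_def)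
    qed
    have "m' \<in> dist p ` A" unfolding m'_def using fA Ane by auto
    hence "m' \<in> dist p ` X" unfolding A_def by auto
    hence "m' \<in> D" unfolding D_def using eq r A_def by auto
    hence "m \<le> m'" unfolding m_def using Df by auto
    thus "m \<le> r" using m'r by auto
  qed
  have "Inf ?R = m" by (rule cInf_eq_minimum[OF mR]) (use low in auto)
  thus ?thesis using mR unfolding dS_def by auto
qed

lemma greedy:
  fixes r :: "'a::metric_space \<Rightarrow> real"
  assumes "finite Y" "\<forall>y\<in>Y. 0 \<le> r y"
  shows "\<exists>S\<subseteq>Y. (\<forall>s1\<in>S. \<forall>s2\<in>S. s1\<noteq>s2 \<longrightarrow> r s1 + r s2 < dist s1 s2)
     \<and> (\<forall>y\<in>Y. \<exists>s\<in>S. dist y s \<le> 2 * r y)"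
  using assms
proof (induction "card Y" arbitrary: Y rule: less_induct)
  case less
  show ?case
  proof (cases "Y = {}")
    case True thus ?thesis by auto
  next
    case False
    have "Min (r ` Y) \<in> r ` Y" using False less.prems by auto
    then obtain y0 where y0: "y0 \<in> Y" "r y0 = Min (r ` Y)" by auto
    have y0min: "\<forall>y\<in>Y. r y0 \<le> r y" using y0 less.prems by auto
    define Y' where "Y' = {y\<in>Y. 2 * r y < dist y y0}"
    have "Y' \<subset> Y" unfolding Y'_def using y0 less.prems by force
    hence "card Y' < card Y" using less.prems by (simp add: psubset_card_mono)
    moreover have "finite Y'" "\<forall>y\<in>Y'. 0 \<le> r y" using less.prems unfolding Y'_def by auto
    ultimately obtain S' where S': "S' \<subseteq> Y'"
      "\<forall>s1\<in>S'. \<forall>s2\<in>S'. s1\<noteq>s2 \<longrightarrow> r s1 + r s2 < dist s1 s2"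
      "\<forall>y\<in>Y'. \<exists>s\<in>S'. dist y s \<le> 2 * r y"
      using less.hyps[of Y'] by auto
    show ?thesis
    proof (intro exI[of _ "insert y0 S'"] conjI)
      show "insert y0 S' \<subseteq> Y" using S'(1) y0 unfolding Y'_def by auto
      have A: "\<forall>s\<in>S'. r s + r y0 < dist s y0"
      proof
        fix s assume "s \<in> S'"
        hence "s \<in> Y" "2 * r s < dist s y0" using S'(1) unfolding Y'_def by auto
        thus "r s + r y0 < dist s y0" using y0min by fastforce
      qed
      show "\<forall>s1\<in>insert y0 S'. \<forall>s2\<in>insert y0 S'. s1\<noteq>s2 \<longrightarrow> r s1 + r s2 < dist s1 s2"
        using A S'(2) by (auto simp: dist_commute add.commute)
      show "\<forall>y\<in>Y. \<exists>s\<in>insert y0 S'. dist y s \<le> 2 * r y"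
      proof
        fix y assume y: "y \<in> Y"
        show "\<exists>s\<in>insert y0 S'. dist y s \<le> 2 * r y"
        proof (cases "y \<in> Y'")
          case True thus ?thesis using S'(3) by auto
        next
          case False thus ?thesis using y unfolding Y'_def by auto
        qed
      qed
    qed
  qed
qed

theorem mainTheorem4:
  fixes X Y :: "'a::metric_space set" and t h :: nat
  assumes "finite X" and "card X = t"
    and "1 \<le> h" and "h \<le> t"
    and "finite Y" and "Y \<noteq> {}"
  shows "\<exists>S. S \<subseteq> Y \<and> S \<noteq> {} \<and> real (card S) \<le> real t / real h \<and>
           (\<forall>y\<in>Y. dS S y 1 \<le> 2 * dS X y h)"
proof -
  define r where "r = (\<lambda>y. dS X y h)"
  have att: "\<And>p. 0 \<le> r p \<and> h \<le> card {x\<in>X. dist p x \<le> r p}"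
    unfolding r_def using dS_attain assms by auto
  obtain S where S: "S \<subseteq> Y" "\<forall>s1\<in>S. \<forall>s2\<in>S. s1\<noteq>s2 \<longrightarrow> r s1 + r s2 < dist s1 s2"
      "\<forall>y\<in>Y. \<exists>s\<in>S. dist y s \<le> 2 * r y"
    using greedy[of Y r] assms(5) att by auto
  have fS: "finite S" using S(1) assms(5) finite_subset by auto
  have Sne: "S \<noteq> {}" using S(3) assms(6) by auto
  define B where "B = (\<lambda>s. {x\<in>X. dist s x \<le> r s})"
  have disj: "\<forall>s1\<in>S. \<forall>s2\<in>S. s1 \<noteq> s2 \<longrightarrow> B s1 \<inter> B s2 = {}"
  proof (intro ballI impI)
    fix s1 s2 assume a: "s1 \<in> S" "s2 \<in> S" "s1 \<noteq> s2"
    show "B s1 \<inter> B s2 = {}"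
    proof (rule ccontr)
      assume "B s1 \<inter> B s2 \<noteq> {}"
      then obtain x where "dist s1 x \<le> r s1" "dist s2 x \<le> r s2" unfolding B_def by auto
      moreover have "dist s1 s2 \<le> dist s1 x + dist s2 x" by (metis dist_commute dist_triangle)
      ultimately show False using S(2) a by fastforce
    qed
  qed
  have "card (\<Union>s\<in>S. B s) = (\<Sum>s\<in>S. card (B s))"
    by (rule card_UN_disjoint[OF fS]) (use assms(1) disj in \<open>auto simp: B_def\<close>)
  moreover have "(\<Sum>s\<in>S. card (B s)) \<ge> (\<Sum>s\<in>S. h)"
    by (rule sum_mono) (use att in \<open>auto simp: B_def\<close>)
  moreover have "card (\<Union>s\<in>S. B s) \<le> card X"
    by (rule card_mono[OF assms(1)]) (auto simp: B_def)
  ultimately have "card S * h \<le> t" using assms(2) by auto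
  hence "real (card S) * real h \<le> real t" by (metis of_nat_le_iff of_nat_mult)
  hence cardS: "real (card S) \<le> real t / real h" using assms(3) by (simp add: field_simps)
  have cov: "\<forall>y\<in>Y. dS S y 1 \<le> 2 * dS X y h"
  proof
    fix y assume "y \<in> Y"
    then obtain s where s: "s \<in> S" "dist y s \<le> 2 * r y" using S(3) by auto
    have "1 \<le> card {s'\<in>S. dist y s' \<le> dist y s}"
    proof -
      have "s \<in> {s'\<in>S. dist y s' \<le> dist y s}" using s by auto
      moreover have "finite {s'\<in>S. dist y s' \<le> dist y s}" using fS by auto
      ultimately show ?thesis by (metis One_nat_def Suc_leI card_gt_0_iff empty_iff)
    qed
    hence "dS S y 1 \<le> dist y s" unfolding dS_def
      by (intro cInf_lower) (auto intro: bdd_belowI[of _ 0])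
    thus "dS S y 1 \<le> 2 * dS X y h" using s unfolding r_def by auto
  qed
  show ?thesis using S(1) Sne cardS cov by blast
qed

end
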